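(* Let $p$ be a prime and $\alpha=(\ell_1,\dots,\ell_m)$ a type, and let $A(\alpha)=\prod_{i=1}^m\mathbb{Z}/p^{\ell_i}\mathbb{Z}$. (a) If $\{\mathfrak z_1,\dots,\mathfrak z_r\}$ is a minimal generating set of $A(\alpha)$ (i.e. a generating set no proper subset of which generates) with $|\mathfrak z_i|=p^{d_i}$ and $\ell_1=d_1\ge d_2\ge\cdots\ge d_r\ge 1$, then $r=m$ and $d_i\ge \ell_i$ for all $i$. (b) Conversely, given integers $d_1,\dots,d_m$ with $\ell_1=d_1\ge\cdots\ge d_m\ge 1$ and $d_i\ge\ell_i$ for all $i$, there exists a minimal generating set $\{\mathfrak z_1,\dots,\mathfrak z_m\}$ of $A(\alpha)$ with $|\mathfrak z_i|=p^{d_i}$ for all $i$.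
   Context: A type is a tuple of integers $(k_1,\dots,k_n)$ with $k_1\ge\cdots\ge k_n\ge1$. For $\mathfrak x$ in a group, $|\mathfrak x|$ denotes its order. *)

theory Defs
  imports "HOL-Algebra.Algebra"
begin

text \<open>A type of length m: a weakly decreasing tuple (l_0,...,l_{m-1}) of positive integers,
  m >= 1, indexed from 0.\<close>
definition is_type :: "(nat \<Rightarrow> nat) \<Rightarrow> nat \<Rightarrow> bool" where
  "is_type l m \<longleftrightarrow> 1 \<le> m \<and> (\<forall>i j. i \<le> j \<longrightarrow> j < m \<longrightarrow> l j \<le> l i) \<and> (\<forall>i<m. 1 \<le> l i)"

definition A_grp :: "nat \<Rightarrow> (nat \<Rightarrow> nat) \<Rightarrow> nat \<Rightarrow> (nat \<Rightarrow> int) monoid" where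
  "A_grp p l m = product_group {..<m} (\<lambda>i. integer_mod_group (p ^ l i))"

definition minimal_generating_set :: "('a, 'b) monoid_scheme \<Rightarrow> 'a set \<Rightarrow> bool" where
  "minimal_generating_set G S \<longleftrightarrow> S \<subseteq> carrier G \<and> generate G S = carrier G \<and>
     (\<forall>T. T \<subset> S \<longrightarrow> generate G T \<noteq> carrier G)"

end

theory Submission
  imports Defs "HOL-Computational_Algebra.Primes"
begin


definition nrm :: "nat \<Rightarrow> (nat \<Rightarrow> nat) \<Rightarrow> nat \<Rightarrow> (nat \<Rightarrow> int) \<Rightarrow> (nat \<Rightarrow> int)" where
  "nrm p l m v = (\<lambda>i\<in>{..<m}. v i mod (int p ^ l i))"

lemma A_carrier: "0 < p \<Longrightarrow> carrier (A_grp p l m) = (\<Pi>\<^sub>E i\<in>{..<m}. {0..<int p ^ l i})"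
  by (simp add: A_grp_def carrier_integer_mod_group)

lemma A_mult: "(\<otimes>\<^bsub>A_grp p l m\<^esub>) = (\<lambda>x y. \<lambda>i\<in>{..<m}. (x i + y i) mod (int p ^ l i))"
  by (simp add: A_grp_def)

lemma A_one: "\<one>\<^bsub>A_grp p l m\<^esub> = (\<lambda>i\<in>{..<m}. 0)"
  by (simp add: A_grp_def)

lemma A_group: "group (A_grp p l m)"
  by (simp add: A_grp_def)

lemma A_pow:
  assumes "0 < p" "x \<in> carrier (A_grp p l m)"
  shows "x [^]\<^bsub>A_grp p l m\<^esub> (n::nat) = nrm p l m (\<lambda>i. int n * x i)"
proof (induction n)
  case 0
  then show ?case using assms by (auto simp: A_one nrm_def A_carrier PiE_iff)
next
  case (Suc n)
  then show ?case by (simp add: A_mult nrm_def fun_eq_iff mod_add_right_eq algebra_simps)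
qed

lemma A_inv:
  assumes "0 < p" "x \<in> carrier (A_grp p l m)"
  shows "inv\<^bsub>A_grp p l m\<^esub> x = nrm p l m (\<lambda>i. - x i)"
proof -
  have x: "x \<in> (\<Pi>\<^sub>E i\<in>{..<m}. carrier (integer_mod_group (p ^ l i)))"
    using assms(2) by (simp add: A_grp_def)
  have "inv\<^bsub>A_grp p l m\<^esub> x = (\<lambda>i\<in>{..<m}. inv\<^bsub>integer_mod_group (p ^ l i)\<^esub> x i)"
    unfolding A_grp_def by (rule inv_product_group[OF x]) simp
  also have "\<dots> = nrm p l m (\<lambda>i. - x i)"
    unfolding nrm_def
  proof (rule restrict_ext)
    fix i assume "i \<in> {..<m}"
    then have "x i \<in> carrier (integer_mod_group (p ^ l i))" using x by blast
    then show "inv\<^bsub>integer_mod_group (p ^ l i)\<^esub> x i = - x i mod int p ^ l i"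
      by simp
  qed
  finally show ?thesis .
qed

lemma nrm_carrier: "0 < p \<Longrightarrow> nrm p l m v \<in> carrier (A_grp p l m)"
  by (auto simp: A_carrier nrm_def)

lemma nrm_mult: "nrm p l m v \<otimes>\<^bsub>A_grp p l m\<^esub> nrm p l m w = nrm p l m (\<lambda>i. v i + w i)"
  by (simp add: A_mult nrm_def fun_eq_iff mod_add_eq)

lemma nrm_id: "0 < p \<Longrightarrow> x \<in> carrier (A_grp p l m) \<Longrightarrow> nrm p l m x = x"
  by (auto simp: A_carrier nrm_def PiE_iff fun_eq_iff extensional_def)

lemma nrm_inv: "0 < p \<Longrightarrow> inv\<^bsub>A_grp p l m\<^esub> (nrm p l m v) = nrm p l m (\<lambda>i. - v i)"
  by (simp add: A_inv nrm_carrier) (simp add: nrm_def fun_eq_iff mod_minus_eq)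

lemma nrm_eq_iff: "nrm p l m v = nrm p l m w \<longleftrightarrow> (\<forall>i<m. v i mod (int p ^ l i) = w i mod (int p ^ l i))"
  by (auto simp: nrm_def fun_eq_iff)

lemma A_ipow:
  assumes "0 < p" "x \<in> carrier (A_grp p l m)"
  shows "x [^]\<^bsub>A_grp p l m\<^esub> (c::int) = nrm p l m (\<lambda>i. c * x i)"
proof (cases "c < 0")
  case True
  have pw: "x [^]\<^bsub>A_grp p l m\<^esub> nat (-c) = nrm p l m (\<lambda>i. int (nat (-c)) * x i)"
    by (rule A_pow[OF assms])
  have "x [^]\<^bsub>A_grp p l m\<^esub> c = inv\<^bsub>A_grp p l m\<^esub> (x [^]\<^bsub>A_grp p l m\<^esub> nat (-c))"
    using True by (simp only: int_pow_def2 if_True)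
  also have "\<dots> = inv\<^bsub>A_grp p l m\<^esub> (nrm p l m (\<lambda>i. int (nat (-c)) * x i))"
    by (simp only: pw)
  also have "\<dots> = nrm p l m (\<lambda>i. - (int (nat (-c)) * x i))"
    by (rule nrm_inv[OF assms(1)])
  also have "(\<lambda>i. - (int (nat (-c)) * x i)) = (\<lambda>i. c * x i)"
    using True by simp
  finally show ?thesis .
next
  case False
  have "x [^]\<^bsub>A_grp p l m\<^esub> c = x [^]\<^bsub>A_grp p l m\<^esub> nat c"
    using False by (simp only: int_pow_def2 if_False)
  also have "\<dots> = nrm p l m (\<lambda>i. int (nat c) * x i)"
    by (rule A_pow[OF assms])
  also have "(\<lambda>i. int (nat c) * x i) = (\<lambda>i. c * x i)"
    using False by simp
  finally show ?thesis .
qed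

definition gspan :: "nat \<Rightarrow> (nat \<Rightarrow> nat) \<Rightarrow> nat \<Rightarrow> nat set \<Rightarrow> (nat \<Rightarrow> nat \<Rightarrow> int) \<Rightarrow> (nat \<Rightarrow> int) set" where
  "gspan p l m J z = {nrm p l m (\<lambda>t. \<Sum>j\<in>J. c j * z j t) | c. True}"

lemma spanI: "x = nrm p l m (\<lambda>t. \<Sum>j\<in>J. c j * z j t) \<Longrightarrow> x \<in> gspan p l m J z"
  unfolding gspan_def by (intro CollectI exI[of _ c]) simp

lemma span_sub:
  assumes "0 < p" "finite J" "z ` J \<subseteq> carrier (A_grp p l m)"
  shows "generate (A_grp p l m) (z ` J) \<subseteq> gspan p l m J z"
proof -
  interpret group "A_grp p l m" by (rule A_group)
  have "subgroup (gspan p l m J z) (A_grp p l m)"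
  proof
    show "gspan p l m J z \<subseteq> carrier (A_grp p l m)"
    proof
      fix x assume "x \<in> gspan p l m J z"
      then obtain c where "x = nrm p l m (\<lambda>t. \<Sum>j\<in>J. c j * z j t)"
        unfolding gspan_def by blast
      then show "x \<in> carrier (A_grp p l m)" using nrm_carrier[OF assms(1)] by simp
    qed
    show "x \<otimes>\<^bsub>A_grp p l m\<^esub> y \<in> gspan p l m J z" if xy: "x \<in> gspan p l m J z" "y \<in> gspan p l m J z" for x y
    proof -
      obtain c where cx: "x = nrm p l m (\<lambda>t. \<Sum>j\<in>J. c j * z j t)"
        using xy(1) unfolding gspan_def by blast
      obtain c' where cy: "y = nrm p l m (\<lambda>t. \<Sum>j\<in>J. c' j * z j t)"
        using xy(2) unfolding gspan_def by blast
      have e: "(\<lambda>t. (\<Sum>j\<in>J. c j * z j t) + (\<Sum>j\<in>J. c' j * z j t)) = (\<lambda>t. \<Sum>j\<in>J. (c j + c' j) * z j t)"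
        by (simp add: distrib_right sum.distrib)
      have "x \<otimes>\<^bsub>A_grp p l m\<^esub> y = nrm p l m (\<lambda>t. \<Sum>j\<in>J. (c j + c' j) * z j t)"
        unfolding cx cy nrm_mult e ..
      then show ?thesis by (rule spanI)
    qed
    have "\<one>\<^bsub>A_grp p l m\<^esub> = nrm p l m (\<lambda>t. \<Sum>j\<in>J. 0 * z j t)"
      by (simp add: A_one nrm_def)
    then show "\<one>\<^bsub>A_grp p l m\<^esub> \<in> gspan p l m J z"
      by (rule spanI)
    show "inv\<^bsub>A_grp p l m\<^esub> x \<in> gspan p l m J z" if xs: "x \<in> gspan p l m J z" for x
    proof -
      obtain c where cx: "x = nrm p l m (\<lambda>t. \<Sum>j\<in>J. c j * z j t)"
        using xs unfolding gspan_def by blast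
      have e: "(\<lambda>t. - (\<Sum>j\<in>J. c j * z j t)) = (\<lambda>t. \<Sum>j\<in>J. (- c j) * z j t)"
        by (simp add: sum_negf)
      have "inv\<^bsub>A_grp p l m\<^esub> x = nrm p l m (\<lambda>t. \<Sum>j\<in>J. (- c j) * z j t)"
        unfolding cx nrm_inv[OF assms(1)] e ..
      then show ?thesis by (rule spanI)
    qed
  qed
  moreover have "z ` J \<subseteq> gspan p l m J z"
  proof
    fix x assume "x \<in> z ` J"
    then obtain j where j: "j \<in> J" "x = z j" by auto
    have "(\<Sum>k\<in>J. (if k = j then 1 else 0) * z k t) = z j t" for t
      by (subst sum.remove[OF assms(2) j(1)]) simp
    then have "(\<lambda>t. \<Sum>k\<in>J. (if k = j then 1 else 0) * z k t) = z j" by (rule ext)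
    moreover have "nrm p l m (z j) = x"
      using j assms by (intro trans[OF nrm_id]) auto
    ultimately have "nrm p l m (\<lambda>t. \<Sum>k\<in>J. (if k = j then 1 else 0) * z k t) = x"
      by simp
    then show "x \<in> gspan p l m J z" by (rule spanI[OF sym])
  qed
  ultimately show ?thesis by (rule generate_subgroup_incl[rotated])
qed

lemma span_sup:
  assumes "0 < p" "finite J" "z ` J0 \<subseteq> carrier (A_grp p l m)" "J \<subseteq> J0"
  shows "nrm p l m (\<lambda>t. \<Sum>j\<in>J. c j * z j t) \<in> generate (A_grp p l m) (z ` J0)"
  using assms(2,4)
proof (induction J rule: finite_induct)
  case empty
  interpret group "A_grp p l m" by (rule A_group)
  have "nrm p l m (\<lambda>t. 0) = \<one>\<^bsub>A_grp p l m\<^esub>" by (simp add: A_one nrm_def)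
  then show ?case using generate.one[of "A_grp p l m" "z ` J0"] by simp
next
  case (insert j J)
  interpret group "A_grp p l m" by (rule A_group)
  have zj: "z j \<in> carrier (A_grp p l m)" using insert.prems assms(3) by auto
  have IH: "nrm p l m (\<lambda>t. \<Sum>k\<in>J. c k * z k t) \<in> generate (A_grp p l m) (z ` J0)"
    using insert.IH insert.prems by simp
  have e1: "z j [^]\<^bsub>A_grp p l m\<^esub> c j = nrm p l m (\<lambda>t. c j * z j t)"
    by (rule A_ipow[OF assms(1) zj])
  have "(\<lambda>t. \<Sum>k\<in>insert j J. c k * z k t) = (\<lambda>t. (\<Sum>k\<in>J. c k * z k t) + c j * z j t)"
    using insert(1,2) by (simp add: add.commute)
  then have "nrm p l m (\<lambda>t. \<Sum>k\<in>insert j J. c k * z k t) =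
        nrm p l m (\<lambda>t. \<Sum>k\<in>J. c k * z k t) \<otimes>\<^bsub>A_grp p l m\<^esub> (z j [^]\<^bsub>A_grp p l m\<^esub> c j)"
    by (simp only: e1 nrm_mult)
  moreover have "z j [^]\<^bsub>A_grp p l m\<^esub> c j \<in> generate (A_grp p l m) (z ` J0)"
  proof (rule subgroup_int_pow_closed)
    show "subgroup (generate (A_grp p l m) (z ` J0)) (A_grp p l m)"
      by (rule generate_is_subgroup[OF assms(3)])
    show "z j \<in> generate (A_grp p l m) (z ` J0)"
      using insert.prems by (intro generate.incl) auto
  qed
  ultimately show ?case using generate.eng[OF IH] by simp
qed

lemma gen_span:
  assumes "0 < p" "finite J" "z ` J \<subseteq> carrier (A_grp p l m)"
  shows "generate (A_grp p l m) (z ` J) = gspan p l m J z"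
proof
  show "generate (A_grp p l m) (z ` J) \<subseteq> gspan p l m J z" by (rule span_sub[OF assms])
  show "gspan p l m J z \<subseteq> generate (A_grp p l m) (z ` J)"
  proof
    fix x assume "x \<in> gspan p l m J z"
    then obtain c where "x = nrm p l m (\<lambda>t. \<Sum>j\<in>J. c j * z j t)"
      unfolding gspan_def by blast
    then show "x \<in> generate (A_grp p l m) (z ` J)" using span_sup[OF assms(1,2,3)] by simp
  qed
qed



lemma count_le:
  fixes p :: nat and v :: "nat \<Rightarrow> nat \<Rightarrow> int"
  assumes "1 < p" "finite I" "finite J"
    and H: "\<forall>w \<in> (\<Pi>\<^sub>E t\<in>I. {0..<int p}). \<exists>c. \<forall>t\<in>I. int p dvd (w t - (\<Sum>j\<in>J. c j * v j t))"
  shows "card I \<le> card J"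
proof -
  define F where "F = (\<lambda>c. \<lambda>t\<in>I. (\<Sum>j\<in>J. c j * v j t) mod int p)"
  define D where "D = (\<Pi>\<^sub>E j\<in>J. {0..<int p})"
  define W where "W = (\<Pi>\<^sub>E t\<in>I. {0..<int p})"
  have "W \<subseteq> F ` D"
  proof
    fix w assume w: "w \<in> W"
    then obtain c where c: "\<forall>t\<in>I. int p dvd (w t - (\<Sum>j\<in>J. c j * v j t))"
      using H unfolding W_def by blast
    define c' where "c' = (\<lambda>j\<in>J. c j mod int p)"
    have "c' \<in> D" using assms(1) by (auto simp: c'_def D_def)
    moreover have "F c' = w"
    proof
      fix t show "F c' t = w t"
      proof (cases "t \<in> I")
        case True
        have d1: "int p dvd ((\<Sum>j\<in>J. c' j * v j t) - (\<Sum>j\<in>J. c j * v j t))"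
          unfolding sum_subtractf[symmetric]
          by (rule dvd_sum) (auto simp: c'_def left_diff_distrib[symmetric] mod_eq_dvd_iff[symmetric])
        have "int p dvd (w t - (\<Sum>j\<in>J. c' j * v j t))"
          using dvd_diff[OF c[rule_format, OF True] d1] by (simp add: algebra_simps)
        then have "w t mod int p = (\<Sum>j\<in>J. c' j * v j t) mod int p"
          by (simp add: mod_eq_dvd_iff)
        moreover have "w t \<in> {0..<int p}" using w True unfolding W_def by blast
        then have "w t mod int p = w t" by simp
        ultimately show ?thesis using True by (simp add: F_def)
      next
        case False
        then show ?thesis using w by (auto simp: F_def W_def PiE_def extensional_def)
      qed
    qed
    ultimately show "w \<in> F ` D" by blast
  qed
  then have "card W \<le> card (F ` D)"
    by (rule card_mono[rotated]) (auto simp: D_def assms finite_PiE)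
  also have "\<dots> \<le> card D" by (rule card_image_le) (auto simp: D_def assms finite_PiE)
  finally have "p ^ card I \<le> p ^ card J"
    using assms by (simp add: W_def D_def card_PiE)
  then show ?thesis using assms(1) by (rule power_le_imp_le_exp[rotated])
qed



lemma is_typeD:
  assumes "is_type l m"
  shows "1 \<le> m" "\<And>t. t < m \<Longrightarrow> 1 \<le> l t" "\<And>t. t < m \<Longrightarrow> l t \<le> l 0"
    "\<And>i j. i \<le> j \<Longrightarrow> j < m \<Longrightarrow> l j \<le> l i"
  using assms unfolding is_type_def by auto

lemma pow_one_iff:
  assumes "0 < p" "x \<in> carrier (A_grp p l m)"
  shows "x [^]\<^bsub>A_grp p l m\<^esub> (n::nat) = \<one>\<^bsub>A_grp p l m\<^esub> \<longleftrightarrow> (\<forall>t<m. int p ^ l t dvd int n * x t)"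
proof -
  have "\<one>\<^bsub>A_grp p l m\<^esub> = nrm p l m (\<lambda>_. 0)" by (simp add: A_one nrm_def)
  then show ?thesis using assms by (simp add: A_pow nrm_eq_iff dvd_eq_mod_eq_0)
qed

lemma p_dvd_comp:
  assumes "1 < p" "x \<in> carrier (A_grp p l m)" "group.ord (A_grp p l m) x = p ^ dx"
    "dx < k" "k \<le> l t" "t < m"
  shows "int p dvd x t"
proof -
  interpret group "A_grp p l m" by (rule A_group)
  have "p ^ dx dvd p ^ (k - 1)" using assms by (simp add: le_imp_power_dvd)
  then have "x [^]\<^bsub>A_grp p l m\<^esub> (p ^ (k - 1)) = \<one>\<^bsub>A_grp p l m\<^esub>"
    using assms by (simp add: pow_eq_id)
  then have "int p ^ l t dvd int p ^ (k - 1) * x t" using assms by (simp add: pow_one_iff)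
  moreover have "int p ^ (k - 1) * int p dvd int p ^ l t"
    using assms by (simp add: le_imp_power_dvd flip: power_Suc2)
  ultimately have "int p ^ (k - 1) * int p dvd int p ^ (k - 1) * x t" by (rule dvd_trans[rotated])
  then show ?thesis using assms by simp
qed

lemma span_obt:
  assumes "0 < p" "g \<in> gspan p l m J z"
  shows "\<exists>c. \<forall>t<m. int p ^ l t dvd (g t - (\<Sum>j\<in>J. c j * z j t))"
proof -
  obtain c where c: "g = nrm p l m (\<lambda>t. \<Sum>j\<in>J. c j * z j t)" using assms(2) unfolding gspan_def by blast
  have "int p ^ l t dvd (g t - (\<Sum>j\<in>J. c j * z j t))" if t: "t < m" for t
    using c t by (simp add: nrm_def mod_eq_dvd_iff[symmetric])
  then show ?thesis by blast
qed

lemma part_a: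
  assumes pr: "Factorial_Ring.prime p" and ty: "is_type l m"
    and inj: "inj_on z {..<r}" and msg: "minimal_generating_set (A_grp p l m) (z ` {..<r})"
    and ord: "\<forall>i<r. group.ord (A_grp p l m) (z i) = p ^ d i"
    and dmono: "\<forall>i j. i \<le> j \<longrightarrow> j < r \<longrightarrow> d j \<le> d i"
  shows "r = m \<and> (\<forall>i<m. l i \<le> d i)"
proof -
  have p1: "1 < p" using pr prime_gt_1_nat by blast
  then have p0: "0 < p" by simp
  note T = is_typeD[OF ty]
  have zS: "z ` {..<r} \<subseteq> carrier (A_grp p l m)"
    and gen: "generate (A_grp p l m) (z ` {..<r}) = carrier (A_grp p l m)"
    and mini: "\<And>T. T \<subset> z ` {..<r} \<Longrightarrow> generate (A_grp p l m) T \<noteq> carrier (A_grp p l m)"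
    using msg unfolding minimal_generating_set_def by auto
  have zc: "z j \<in> carrier (A_grp p l m)" if "j < r" for j using zS that by auto
  have sp_obt: "\<exists>c. \<forall>t<m. int p ^ l t dvd (g t - (\<Sum>j<r. c j * z j t))"
    if g: "g \<in> carrier (A_grp p l m)" for g
  proof -
    have "g \<in> gspan p l m {..<r} z" using g gen gen_span[OF p0 _ zS] by simp
    then show ?thesis by (rule span_obt[OF p0])
  qed
  have A1: "i < r \<and> l i \<le> d i" if i: "i < m" for i
  proof (rule ccontr)
    assume neg: "\<not> (i < r \<and> l i \<le> d i)"
    define k where "k = l i"
    define J where "J = {j \<in> {..<r}. k \<le> d j}"
    have Jsub: "J \<subseteq> {..<i}"
    proof
      fix j assume "j \<in> J"
      then have j: "j < r" "k \<le> d j" by (auto simp: J_def)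
      show "j \<in> {..<i}"
      proof (rule ccontr)
        assume "j \<notin> {..<i}"
        then have ij: "i \<le> j" by simp
        then have "i < r" using j by simp
        then have "d i < k" using neg k_def by simp
        moreover have "d j \<le> d i" using dmono ij j by blast
        ultimately show False using j by simp
      qed
    qed
    have "card {..i} \<le> card J"
    proof (rule count_le[OF p1])
      show "finite {..i}" by simp
      show "finite J" by (simp add: J_def)
      show "\<forall>w\<in>\<Pi>\<^sub>E t\<in>{..i}. {0..<int p}. \<exists>c. \<forall>t\<in>{..i}. int p dvd (w t - (\<Sum>j\<in>J. c j * z j t))"
      proof
        fix w assume w: "w \<in> (\<Pi>\<^sub>E t\<in>{..i}. {0..<int p})"
        define g where "g = (\<lambda>t\<in>{..<m}. if t \<le> i then w t else 0)"
        have pl: "int p \<le> int p ^ l t" if "t < m" for t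
          using T(2)[OF that] p0 by (intro self_le_power) auto
        have "(if t \<le> i then w t else 0) \<in> {0..<int p ^ l t}" if t: "t < m" for t
        proof (cases "t \<le> i")
          case True
          then have wt: "w t \<in> {0..<int p}" using w by blast
          have "w t < int p ^ l t" using wt pl[OF t] by (meson atLeastLessThan_iff less_le_trans)
          then show ?thesis using True wt by simp
        next
          case False
          then show ?thesis using pl[OF t] p0 by auto
        qed
        then have gc: "g \<in> carrier (A_grp p l m)"
          unfolding g_def A_carrier[OF p0] restrict_PiE_iff by auto
        obtain c where c: "\<forall>t<m. int p ^ l t dvd (g t - (\<Sum>j<r. c j * z j t))"
          using sp_obt[OF gc] by blast
        have "int p dvd (w t - (\<Sum>j\<in>J. c j * z j t))" if t: "t \<le> i" for t
        proof -
          have tm: "t < m" using t i by simp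
          have lt: "k \<le> l t" using T(4)[OF t i] k_def by simp
          have gt: "g t = w t" using tm t by (simp add: g_def)
          have "int p dvd int p ^ l t" using T(2)[OF tm] by (simp add: dvd_power)
          then have d1: "int p dvd (w t - (\<Sum>j<r. c j * z j t))"
            using c tm gt by (metis dvd_trans)
          have d2: "int p dvd (\<Sum>j\<in>{..<r} - J. c j * z j t)"
          proof (rule dvd_sum)
            fix j assume "j \<in> {..<r} - J"
            then have jr: "j < r" and "d j < k" by (auto simp: J_def)
            then have "int p dvd z j t"
              using p_dvd_comp[OF p1 zc[OF jr] _ _ lt tm] ord jr by blast
            then show "int p dvd c j * z j t" by simp
          qed
          have "(\<Sum>j<r. c j * z j t) = (\<Sum>j\<in>{..<r} - J. c j * z j t) + (\<Sum>j\<in>J. c j * z j t)"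
            by (rule sum.subset_diff) (auto simp: J_def)
          then have eq: "w t - (\<Sum>j\<in>J. c j * z j t) = (w t - (\<Sum>j<r. c j * z j t)) + (\<Sum>j\<in>{..<r} - J. c j * z j t)"
            by simp
          show ?thesis unfolding eq by (rule dvd_add[OF d1 d2])
        qed
        then show "\<exists>c. \<forall>t\<in>{..i}. int p dvd (w t - (\<Sum>j\<in>J. c j * z j t))" by auto
      qed
    qed
    moreover have "card J \<le> i" using card_mono[OF _ Jsub] by simp
    ultimately show False by simp
  qed
  have rm: "m \<le> r"
  proof -
    have "m - 1 < m" using T(1) by simp
    from A1[OF this] have "m - 1 < r" by simp
    then show ?thesis by simp
  qed
  have "r \<le> m"
  proof (rule ccontr)
    assume "\<not> r \<le> m"
    then have rm': "m < r" by simp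
    define F where "F = (\<lambda>c. \<lambda>t\<in>{..<m}. (\<Sum>j<r. c j * z j t) mod int p)"
    define D where "D = (\<Pi>\<^sub>E j\<in>{..<r}. {0..<int p})"
    define E where "E = (\<Pi>\<^sub>E t\<in>{..<m}. {0..<int p})"
    have FD: "F ` D \<subseteq> E" using p0 by (auto simp: F_def E_def)
    have "\<not> inj_on F D"
    proof
      assume "inj_on F D"
      then have "card D \<le> card E" using card_inj_on_le[OF _ FD] by (simp add: E_def finite_PiE)
      then have "p ^ r \<le> p ^ m" by (simp add: D_def E_def card_PiE)
      then have "r \<le> m" using p1 by (rule power_le_imp_le_exp[rotated])
      then show False using rm' by simp
    qed
    then obtain c c' where cc: "c \<in> D" "c' \<in> D" "F c = F c'" "c \<noteq> c'"
      unfolding inj_on_def by blast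
    obtain j0 where j0: "c j0 \<noteq> c' j0" using cc(4) by (auto simp: fun_eq_iff)
    have j0r: "j0 < r"
    proof (rule ccontr)
      assume "\<not> j0 < r"
      then have "j0 \<notin> {..<r}" by simp
      then have "c j0 = undefined" "c' j0 = undefined"
        using cc(1,2) unfolding D_def by (auto intro: PiE_arb)
      then show False using j0 by simp
    qed
    define a where "a = (\<lambda>j. c j - c' j)"
    have a0: "\<not> int p dvd a j0"
    proof
      assume "int p dvd a j0"
      then have "c j0 mod int p = c' j0 mod int p" by (simp add: a_def mod_eq_dvd_iff)
      moreover have "c j0 \<in> {0..<int p}" "c' j0 \<in> {0..<int p}"
        using cc(1,2) j0r unfolding D_def by blast+
      ultimately have "c j0 = c' j0" by simp
      then show False using j0 by simp
    qed
    have arel: "int p dvd (\<Sum>j<r. a j * z j t)" if t: "t < m" for t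
    proof -
      have "F c t = F c' t" using cc(3) by simp
      then have "(\<Sum>j<r. c j * z j t) mod int p = (\<Sum>j<r. c' j * z j t) mod int p"
        using t by (simp add: F_def)
      then have "int p dvd ((\<Sum>j<r. c j * z j t) - (\<Sum>j<r. c' j * z j t))"
        by (simp add: mod_eq_dvd_iff)
      also have "(\<Sum>j<r. c j * z j t) - (\<Sum>j<r. c' j * z j t) = (\<Sum>j<r. a j * z j t)"
        by (simp add: a_def sum_subtractf[symmetric] left_diff_distrib)
      finally show ?thesis .
    qed
    obtain b where b: "int p dvd (b * a j0 - 1)"
    proof -
      have "Factorial_Ring.prime (int p)" using pr by simp
      then have "coprime (int p) (a j0)" using a0 by (rule prime_imp_coprime)
      then have g1: "gcd (a j0) (int p) = 1" by (simp add: coprime_iff_gcd_eq_1 gcd.commute)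
      obtain u v where "u * a j0 + v * int p = gcd (a j0) (int p)" using bezout_int by blast
      then have "u * a j0 - 1 = int p * (- v)" using g1 by (simp add: algebra_simps)
      then have "int p dvd (u * a j0 - 1)" by (metis dvdI)
      then show ?thesis by (rule that)
    qed
    define T where "T = {..<r} - {j0}"
    have finT: "finite T" by (simp add: T_def)
    have rT: "{..<r} = insert j0 T" using j0r by (auto simp: T_def)
    have j0T: "j0 \<notin> T" by (simp add: T_def)
    have zTc: "z ` T \<subseteq> carrier (A_grp p l m)" using zS by (auto simp: T_def)
    have zT: "z ` T \<subset> z ` {..<r}"
    proof
      show "z ` T \<subseteq> z ` {..<r}" by (auto simp: T_def)
      have "z j0 \<notin> z ` T"
      proof
        assume "z j0 \<in> z ` T"
        then obtain j where j: "j \<in> T" "z j0 = z j" by auto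
        then have "j0 = j" using inj j0r unfolding inj_on_def T_def by blast
        then show False using j j0T by simp
      qed
      then show "z ` T \<noteq> z ` {..<r}" using j0r by auto
    qed
    have L: "\<exists>c g'. \<forall>t<m. int p ^ l t dvd (g t - (\<Sum>j\<in>T. c j * z j t) - int p * g' t)" for g
    proof -
      obtain e where e: "\<forall>t<m. int p ^ l t dvd (nrm p l m g t - (\<Sum>j<r. e j * z j t))"
        using sp_obt[OF nrm_carrier[OF p0]] by blast
      have e': "int p ^ l t dvd (g t - (\<Sum>j<r. e j * z j t))" if t: "t < m" for t
      proof -
        have "int p ^ l t dvd (g t - nrm p l m g t)"
          using t by (simp add: nrm_def mod_eq_dvd_iff[symmetric])
        then have "int p ^ l t dvd ((g t - nrm p l m g t) + (nrm p l m g t - (\<Sum>j<r. e j * z j t)))"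
          using e t by (intro dvd_add) auto
        then show ?thesis by simp
      qed
      define q where "q = (\<lambda>t. (z j0 t + b * (\<Sum>j\<in>T. a j * z j t)) div int p)"
      have q: "int p * q t = z j0 t + b * (\<Sum>j\<in>T. a j * z j t)" if t: "t < m" for t
      proof -
        have s: "(\<Sum>j<r. a j * z j t) = a j0 * z j0 t + (\<Sum>j\<in>T. a j * z j t)"
          unfolding rT using finT j0T by simp
        have "int p dvd b * (\<Sum>j<r. a j * z j t) - (b * a j0 - 1) * z j0 t"
          by (rule dvd_diff[OF dvd_mult[OF arel[OF t]] dvd_mult2[OF b]])
        also have "b * (\<Sum>j<r. a j * z j t) - (b * a j0 - 1) * z j0 t = z j0 t + b * (\<Sum>j\<in>T. a j * z j t)"
          unfolding s by (simp add: algebra_simps)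
        finally show ?thesis unfolding q_def by (rule dvd_mult_div_cancel)
      qed
      have "int p ^ l t dvd (g t - (\<Sum>j\<in>T. (e j - e j0 * b * a j) * z j t) - int p * (e j0 * q t))"
        if t: "t < m" for t
      proof -
        have s1: "(\<Sum>j\<in>T. (e j - e j0 * b * a j) * z j t) = (\<Sum>j\<in>T. e j * z j t) - e j0 * b * (\<Sum>j\<in>T. a j * z j t)"
          unfolding sum_distrib_left sum_subtractf[symmetric] by (rule sum.cong) (simp_all add: algebra_simps)
        have s2: "(\<Sum>j<r. e j * z j t) = e j0 * z j0 t + (\<Sum>j\<in>T. e j * z j t)"
          unfolding rT using finT j0T by simp
        have s3: "int p * (e j0 * q t) = e j0 * z j0 t + e j0 * b * (\<Sum>j\<in>T. a j * z j t)"
        proof -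
          have "int p * (e j0 * q t) = e j0 * (int p * q t)" by (rule mult.left_commute)
          also have "\<dots> = e j0 * (z j0 t + b * (\<Sum>j\<in>T. a j * z j t))" by (simp only: q[OF t])
          also have "\<dots> = e j0 * z j0 t + e j0 * b * (\<Sum>j\<in>T. a j * z j t)" by (simp add: distrib_left mult.assoc)
          finally show ?thesis .
        qed
        have "g t - (\<Sum>j\<in>T. (e j - e j0 * b * a j) * z j t) - int p * (e j0 * q t) = g t - (\<Sum>j<r. e j * z j t)"
          unfolding s1 s2 s3 by linarith
        then show ?thesis using e'[OF t] by (simp only:)
      qed
      then show ?thesis by (intro exI[of _ "\<lambda>j. e j - e j0 * b * a j"] exI[of _ "\<lambda>t. e j0 * q t"]) simp
    qed
    have P: "\<exists>c g'. \<forall>t<m. int p ^ l t dvd (g t - (\<Sum>j\<in>T. c j * z j t) - int p ^ n * g' t)" for n g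
    proof (induction n arbitrary: g)
      case 0
      show ?case by (intro exI[of _ "\<lambda>_. 0"] exI[of _ g]) simp
    next
      case (Suc n)
      obtain c g' where cg: "\<forall>t<m. int p ^ l t dvd (g t - (\<Sum>j\<in>T. c j * z j t) - int p ^ n * g' t)"
        using Suc.IH by metis
      obtain c' g'' where cg': "\<forall>t<m. int p ^ l t dvd (g' t - (\<Sum>j\<in>T. c' j * z j t) - int p * g'' t)"
        using L by metis
      have "int p ^ l t dvd (g t - (\<Sum>j\<in>T. (c j + int p ^ n * c' j) * z j t) - int p ^ Suc n * g'' t)"
        if t: "t < m" for t
      proof -
        have s1: "(\<Sum>j\<in>T. (c j + int p ^ n * c' j) * z j t) = (\<Sum>j\<in>T. c j * z j t) + int p ^ n * (\<Sum>j\<in>T. c' j * z j t)"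
          unfolding sum_distrib_left sum.distrib[symmetric] by (rule sum.cong) (simp_all add: algebra_simps)
        have eq: "g t - (\<Sum>j\<in>T. (c j + int p ^ n * c' j) * z j t) - int p ^ Suc n * g'' t =
              (g t - (\<Sum>j\<in>T. c j * z j t) - int p ^ n * g' t) + int p ^ n * (g' t - (\<Sum>j\<in>T. c' j * z j t) - int p * g'' t)"
          unfolding s1 by (simp add: algebra_simps)
        have "int p ^ l t dvd int p ^ n * (g' t - (\<Sum>j\<in>T. c' j * z j t) - int p * g'' t)"
          using cg' t by (simp add: dvd_mult)
        then show ?thesis unfolding eq using cg t by (intro dvd_add) auto
      qed
      then show ?case by (intro exI[of _ "\<lambda>j. c j + int p ^ n * c' j"] exI[of _ g'']) simp
    qed
    have "carrier (A_grp p l m) \<subseteq> gspan p l m T z"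
    proof
      fix g assume g: "g \<in> carrier (A_grp p l m)"
      obtain c g' where cg: "\<forall>t<m. int p ^ l t dvd (g t - (\<Sum>j\<in>T. c j * z j t) - int p ^ l 0 * g' t)"
        using P[of g "l 0"] by metis
      have "g t mod int p ^ l t = (\<Sum>j\<in>T. c j * z j t) mod int p ^ l t" if t: "t < m" for t
      proof -
        have "int p ^ l t dvd int p ^ l 0" using T(3)[OF t] by (simp add: le_imp_power_dvd)
        then have "int p ^ l t dvd int p ^ l 0 * g' t" by simp
        then have "int p ^ l t dvd ((g t - (\<Sum>j\<in>T. c j * z j t) - int p ^ l 0 * g' t) + int p ^ l 0 * g' t)"
          using cg t by (intro dvd_add) auto
        then show ?thesis by (simp add: mod_eq_dvd_iff)
      qed
      then have "nrm p l m g = nrm p l m (\<lambda>t. \<Sum>j\<in>T. c j * z j t)" by (simp add: nrm_eq_iff)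
      then have "g = nrm p l m (\<lambda>t. \<Sum>j\<in>T. c j * z j t)" using nrm_id[OF p0 g] by simp
      then show "g \<in> gspan p l m T z" by (rule spanI)
    qed
    then have "generate (A_grp p l m) (z ` T) = carrier (A_grp p l m)"
      using gen_span[OF p0 finT zTc] group.generate_incl[OF A_group zTc] by (intro equalityI) simp_all
    then show False using mini[OF zT] by simp
  qed
  show ?thesis using \<open>r \<le> m\<close> rm A1 by auto
qed

lemma part_b:
  assumes pr: "Factorial_Ring.prime p" and ty: "is_type l m"
    and d0: "d 0 = l 0" and dmono: "\<forall>i j. i \<le> j \<longrightarrow> j < m \<longrightarrow> d j \<le> d i"
    and d1: "\<forall>i<m. 1 \<le> d i" and ld: "\<forall>i<m. l i \<le> d i"
  shows "\<exists>z :: nat \<Rightarrow> nat \<Rightarrow> int. inj_on z {..<m} \<and>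
            minimal_generating_set (A_grp p l m) (z ` {..<m}) \<and>
            (\<forall>i<m. group.ord (A_grp p l m) (z i) = p ^ d i)"
proof -
  interpret group "A_grp p l m" by (rule A_group)
  have p1: "1 < p" using pr prime_gt_1_nat by blast
  then have p0: "0 < p" by simp
  note T = is_typeD[OF ty]
  have dl0: "d i \<le> l 0" if "i < m" for i using dmono d0 that by (metis le0)
  define z where "z = (\<lambda>i. \<lambda>t\<in>{..<m}. if t = 0 then int p ^ (l 0 - d i) else if t = i then 1 else (0::int))"
  have zcar: "z i \<in> carrier (A_grp p l m)" if "i < m" for i
  proof -
    have a: "int p ^ (l 0 - d i) < int p ^ l 0"
      using p1 d1 T(2)[of 0] T(1) that by (intro power_strict_increasing) auto
    have b: "1 < int p ^ l t" if "t < m" for t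
      using p1 T(2)[OF that] by (simp add: one_less_power)
    have "(if t = 0 then int p ^ (l 0 - d i) else if t = i then 1 else 0) \<in> {0..<int p ^ l t}"
      if t: "t < m" for t
    proof (cases "t = 0")
      case True then show ?thesis using a by simp
    next
      case False then show ?thesis using b[OF t] p0 by auto
    qed
    then show ?thesis unfolding z_def A_carrier[OF p0] restrict_PiE_iff by auto
  qed
  have zS: "z ` {..<m} \<subseteq> carrier (A_grp p l m)" using zcar by auto
  have inj: "inj_on z {..<m}"
  proof (rule inj_onI)
    fix i j assume ij: "i \<in> {..<m}" "j \<in> {..<m}" "z i = z j"
    show "i = j"
    proof (rule ccontr)
      assume ne: "i \<noteq> j"
      show False
      proof (cases "i = 0")
        case True
        then have "z i j = z j j" using ij by simp
        then show False using ij ne True by (simp add: z_def)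
      next
        case False
        then have "z i i = z j i" using ij by simp
        then show False using ij ne False by (simp add: z_def)
      qed
    qed
  qed
  have ord: "group.ord (A_grp p l m) (z i) = p ^ d i" if i: "i < m" for i
  proof -
    have z0: "z i 0 = int p ^ (l 0 - d i)" using T(1) by (simp add: z_def)
    have pe: "int p ^ l 0 = int p ^ d i * int p ^ (l 0 - d i)"
      using dl0[OF i] by (simp flip: power_add)
    have "z i [^]\<^bsub>A_grp p l m\<^esub> n = \<one>\<^bsub>A_grp p l m\<^esub> \<longleftrightarrow> p ^ d i dvd n" for n
    proof
      assume "z i [^]\<^bsub>A_grp p l m\<^esub> n = \<one>\<^bsub>A_grp p l m\<^esub>"
      then have "\<forall>t<m. int p ^ l t dvd int n * z i t" using pow_one_iff[OF p0 zcar[OF i]] by simp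
      then have "int p ^ l 0 dvd int n * z i 0" using T(1) by simp
      then have "int p ^ d i * int p ^ (l 0 - d i) dvd int n * int p ^ (l 0 - d i)"
        by (simp only: z0 pe)
      then have "int p ^ d i dvd int n" using p0 by simp
      then show "p ^ d i dvd n" by (metis of_nat_dvd_iff of_nat_power)
    next
      assume a: "p ^ d i dvd n"
      then have a': "int p ^ d i dvd int n" by (metis of_nat_dvd_iff of_nat_power)
      have "int p ^ l t dvd int n * z i t" if t: "t < m" for t
      proof (cases "t = 0")
        case True
        have "int p ^ d i * int p ^ (l 0 - d i) dvd int n * int p ^ (l 0 - d i)"
          using a' by simp
        then show ?thesis using True by (simp only: z0 pe)
      next
        case False
        have "int p ^ l i dvd int p ^ d i" using ld i by (simp add: le_imp_power_dvd)
        then show ?thesis using False t a' by (auto simp: z_def intro: dvd_trans)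
      qed
      then show "z i [^]\<^bsub>A_grp p l m\<^esub> n = \<one>\<^bsub>A_grp p l m\<^esub>"
        using pow_one_iff[OF p0 zcar[OF i]] by auto
    qed
    then show ?thesis using ord_unique[OF zcar[OF i]] by blast
  qed
  have gen: "generate (A_grp p l m) (z ` {..<m}) = carrier (A_grp p l m)"
  proof
    show "generate (A_grp p l m) (z ` {..<m}) \<subseteq> carrier (A_grp p l m)"
      using generate_incl[OF zS] .
    show "carrier (A_grp p l m) \<subseteq> generate (A_grp p l m) (z ` {..<m})"
    proof
      fix g assume g: "g \<in> carrier (A_grp p l m)"
      define c where "c = (\<lambda>j. if j = 0 then g 0 - (\<Sum>k\<in>{1..<m}. g k * int p ^ (l 0 - d k)) else g j)"
      have split: "{..<m} = insert 0 {1..<m}" using T(1) by auto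
      have "(\<Sum>j<m. c j * z j t) = g t" if t: "t < m" for t
      proof (cases "t = 0")
        case True
        have "(\<Sum>j<m. c j * z j t) = c 0 * z 0 0 + (\<Sum>j\<in>{1..<m}. c j * z j 0)"
          using True by (simp add: split)
        also have "\<dots> = g 0" using T(1) d0 by (simp add: c_def z_def)
        finally show ?thesis using True by simp
      next
        case False
        have "(\<Sum>j<m. c j * z j t) = (\<Sum>j<m. if j = t then c j else 0)"
          using False t by (intro sum.cong) (auto simp: z_def)
        also have "\<dots> = c t" using t by simp
        finally show ?thesis using False by (simp add: c_def)
      qed
      then have "nrm p l m (\<lambda>t. \<Sum>j<m. c j * z j t) = nrm p l m g" by (simp add: nrm_eq_iff)
      also have "\<dots> = g" using nrm_id[OF p0 g] .
      finally have "g \<in> gspan p l m {..<m} z" by (rule spanI[OF sym])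
      then show "g \<in> generate (A_grp p l m) (z ` {..<m})" using gen_span[OF p0 _ zS] by simp
    qed
  qed
  have minimal: "generate (A_grp p l m) T \<noteq> carrier (A_grp p l m)" if TT: "T \<subset> z ` {..<m}" for T
  proof
    assume G: "generate (A_grp p l m) T = carrier (A_grp p l m)"
    obtain j0 where j0: "j0 < m" "z j0 \<notin> T" using TT by auto
    define J where "J = {..<m} - {j0}"
    have TJ: "T \<subseteq> z ` J" using TT j0 by (auto simp: J_def)
    have zJ: "z ` J \<subseteq> carrier (A_grp p l m)" using zS by (auto simp: J_def)
    have sp: "carrier (A_grp p l m) \<subseteq> gspan p l m J z"
      using mono_generate[OF TJ] G gen_span[OF p0 _ zJ] by (simp add: J_def)
    have "card {..<m} \<le> card J"
    proof (rule count_le[OF p1])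
      show "\<forall>w\<in>\<Pi>\<^sub>E t\<in>{..<m}. {0..<int p}. \<exists>c. \<forall>t\<in>{..<m}. int p dvd (w t - (\<Sum>j\<in>J. c j * z j t))"
      proof
        fix w assume w: "w \<in> (\<Pi>\<^sub>E t\<in>{..<m}. {0..<int p})"
        have pl: "int p \<le> int p ^ l t" if "t < m" for t
          using T(2)[OF that] p0 by (intro self_le_power) auto
        have "{0..<int p} \<subseteq> {0..<int p ^ l t}" if "t \<in> {..<m}" for t
          using pl[of t] that by auto
        then have "(\<Pi>\<^sub>E t\<in>{..<m}. {0..<int p}) \<subseteq> (\<Pi>\<^sub>E t\<in>{..<m}. {0..<int p ^ l t})"
          by (rule PiE_mono)
        then have "w \<in> carrier (A_grp p l m)" using w A_carrier[OF p0] by auto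
        then obtain c where c: "w = nrm p l m (\<lambda>t. \<Sum>j\<in>J. c j * z j t)" using sp unfolding gspan_def by blast
        have "int p dvd (w t - (\<Sum>j\<in>J. c j * z j t))" if t: "t < m" for t
        proof -
          have "int p ^ l t dvd (w t - (\<Sum>j\<in>J. c j * z j t))"
            using c t by (simp add: nrm_def mod_eq_dvd_iff[symmetric])
          moreover have "int p dvd int p ^ l t" using T(2)[OF t] by (simp add: dvd_power)
          ultimately show ?thesis by (meson dvd_trans)
        qed
        then show "\<exists>c. \<forall>t\<in>{..<m}. int p dvd (w t - (\<Sum>j\<in>J. c j * z j t))" by blast
      qed
    qed (auto simp: J_def)
    then show False using j0 by (simp add: J_def)
  qed
  show ?thesis
    using inj gen minimal ord zS unfolding minimal_generating_set_def by blast
qed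


theorem theorem3p1:
  fixes p m :: nat and l :: "nat \<Rightarrow> nat"
  assumes "Factorial_Ring.prime p" and "is_type l m"
  shows
   "(\<forall>(r::nat) (z :: nat \<Rightarrow> nat \<Rightarrow> int) (d :: nat \<Rightarrow> nat).
       1 \<le> r \<and> inj_on z {..<r} \<and> minimal_generating_set (A_grp p l m) (z ` {..<r}) \<and>
       (\<forall>i<r. group.ord (A_grp p l m) (z i) = p ^ d i) \<and>
       d 0 = l 0 \<and> (\<forall>i j. i \<le> j \<longrightarrow> j < r \<longrightarrow> d j \<le> d i) \<and> (\<forall>i<r. 1 \<le> d i)
     \<longrightarrow> r = m \<and> (\<forall>i<m. l i \<le> d i))
    \<and>
    (\<forall>d :: nat \<Rightarrow> nat.
       d 0 = l 0 \<and> (\<forall>i j. i \<le> j \<longrightarrow> j < m \<longrightarrow> d j \<le> d i) \<and> (\<forall>i<m. 1 \<le> d i) \<and>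
       (\<forall>i<m. l i \<le> d i)
     \<longrightarrow> (\<exists>z :: nat \<Rightarrow> nat \<Rightarrow> int. inj_on z {..<m} \<and>
            minimal_generating_set (A_grp p l m) (z ` {..<m}) \<and>
            (\<forall>i<m. group.ord (A_grp p l m) (z i) = p ^ d i)))"
  proof (rule conjI; (intro allI impI))
    fix r :: nat and z :: "nat \<Rightarrow> nat \<Rightarrow> int" and d :: "nat \<Rightarrow> nat"
    assume H: "1 \<le> r \<and> inj_on z {..<r} \<and> minimal_generating_set (A_grp p l m) (z ` {..<r}) \<and>
       (\<forall>i<r. group.ord (A_grp p l m) (z i) = p ^ d i) \<and>
       d 0 = l 0 \<and> (\<forall>i j. i \<le> j \<longrightarrow> j < r \<longrightarrow> d j \<le> d i) \<and> (\<forall>i<r. 1 \<le> d i)"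
    then have h1: "inj_on z {..<r}" and h2: "minimal_generating_set (A_grp p l m) (z ` {..<r})"
      and h3: "\<forall>i<r. group.ord (A_grp p l m) (z i) = p ^ d i"
      and h4: "\<forall>i j. i \<le> j \<longrightarrow> j < r \<longrightarrow> d j \<le> d i"
      by simp_all
    show "r = m \<and> (\<forall>i<m. l i \<le> d i)" by (rule part_a[OF assms h1 h2 h3 h4])
  next
    fix d :: "nat \<Rightarrow> nat"
    assume H: "d 0 = l 0 \<and> (\<forall>i j. i \<le> j \<longrightarrow> j < m \<longrightarrow> d j \<le> d i) \<and> (\<forall>i<m. 1 \<le> d i) \<and>
       (\<forall>i<m. l i \<le> d i)"
    then have h1: "d 0 = l 0" and h2: "\<forall>i j. i \<le> j \<longrightarrow> j < m \<longrightarrow> d j \<le> d i"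
      and h3: "\<forall>i<m. 1 \<le> d i" and h4: "\<forall>i<m. l i \<le> d i"
      by simp_all
    show "\<exists>z :: nat \<Rightarrow> nat \<Rightarrow> int. inj_on z {..<m} \<and>
            minimal_generating_set (A_grp p l m) (z ` {..<m}) \<and>
            (\<forall>i<m. group.ord (A_grp p l m) (z i) = p ^ d i)"
      by (rule part_b[OF assms h1 h2 h3 h4])
qed

end
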